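(* Let $\mu>0$ and $\rho>0$ and $s\in\mathbb{R}^m$ be fixed. Then (1) $F(\cdot,s;\mu,\rho)$ is twice differentiable with respect to $x$, and $$\nabla_xF(x,s;\mu,\rho)=\nabla f(x)-\rho\nabla c(x)y,\qquad \nabla_x^2F(x,s;\mu,\rho)=\Big(\nabla^2 f(x)-\rho\sum_{i=1}^m y_i\nabla^2 c_i(x)\Big)+\rho\sum_{i=1}^m\frac{y_i}{z_i+y_i}\nabla c_i(x)\nabla c_i(x)^T,$$ where $y=y(x,s;\mu,\rho)$, $z=z(x,s;\mu,\rho)$; (2) if $f$ and $-c_i$ ($i=1,\dots,m$) are convex on $\mathbb{R}^n$, then $F(\cdot,s;\mu,\rho)$ is convex on $\mathbb{R}^n$.
   Context: Let $f:\mathbb{R}^n\to\mathbb{R}$ and $c=(c_1,\dots,c_m):\mathbb{R}^n\to\mathbb{R}^m$ be twice continuously differentiable; $\nabla c(x)\in\mathbb{R}^{n\times m}$ denotes the matrix whose $i$-th column is $\nabla c_i(x)$. For parameters $\mu>0$, $\rho>0$ and variables $x\in\mathbb{R}^n$, $s\in\mathbb{R}^m$, define for $i=1,\dots,m$: $z_i(x,s;\mu,\rho)=\frac{1}{2\rho}\big(\sqrt{(s_i-\rho c_i(x))^2+4\rho\mu}-(s_i-\rho c_i(x))\big)$, $y_i(x,s;\mu,\rho)=\frac{1}{2\rho}\big(\sqrt{(s_i-\rho c_i(x))^2+4\rho\mu}+(s_i-\rho c_i(x))\big)$, $h_i(x,s;\mu,\rho)=-\mu\ln z_i(x,s;\mu,\rho)+\frac{\rho}{2}y_i(x,s;\mu,\rho)^2-\frac{1}{2\rho}s_i^2$,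 and the augmented Lagrangian $F(x,s;\mu,\rho)=f(x)+\sum_{i=1}^m h_i(x,s;\mu,\rho)$. We abbreviate $z_i,y_i$ when arguments are clear, and write $z=(z_i)$, $y=(y_i)$, $Z=\mathrm{diag}(z)$, $Y=\mathrm{diag}(y)$. *)

theory Defs
  imports "HOL-Analysis.Analysis"
begin

definition zc :: "real \<Rightarrow> real \<Rightarrow> real \<Rightarrow> real \<Rightarrow> real" where
  "zc \<mu> \<rho> si ci = (sqrt ((si - \<rho> * ci)^2 + 4 * \<rho> * \<mu>) - (si - \<rho> * ci)) / (2 * \<rho>)"

definition yc :: "real \<Rightarrow> real \<Rightarrow> real \<Rightarrow> real \<Rightarrow> real" where
  "yc \<mu> \<rho> si ci = (sqrt ((si - \<rho> * ci)^2 + 4 * \<rho> * \<mu>) + (si - \<rho> * ci)) / (2 * \<rho>)"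

definition hc :: "real \<Rightarrow> real \<Rightarrow> real \<Rightarrow> real \<Rightarrow> real" where
  "hc \<mu> \<rho> si ci = - \<mu> * ln (zc \<mu> \<rho> si ci) + \<rho> / 2 * (yc \<mu> \<rho> si ci)^2 - si^2 / (2 * \<rho>)"

definition zv :: "(real^'n \<Rightarrow> real^'m) \<Rightarrow> real \<Rightarrow> real \<Rightarrow> real^'n \<Rightarrow> real^'m \<Rightarrow> 'm \<Rightarrow> real" where
  "zv c \<mu> \<rho> x s i = zc \<mu> \<rho> (s $ i) (c x $ i)"

definition yv :: "(real^'n \<Rightarrow> real^'m) \<Rightarrow> real \<Rightarrow> real \<Rightarrow> real^'n \<Rightarrow> real^'m \<Rightarrow> 'm \<Rightarrow> real" where
  "yv c \<mu> \<rho> x s i = yc \<mu> \<rho> (s $ i) (c x $ i)"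

definition AugLag :: "(real^'n \<Rightarrow> real) \<Rightarrow> (real^'n \<Rightarrow> real^'m) \<Rightarrow> real \<Rightarrow> real \<Rightarrow> real^'n \<Rightarrow> real^'m \<Rightarrow> real" where
  "AugLag f c \<mu> \<rho> x s = f x + (\<Sum>i\<in>UNIV. hc \<mu> \<rho> (s $ i) (c x $ i))"

definition outer :: "real^'n \<Rightarrow> real^'n \<Rightarrow> real^'n^'n" where
  "outer u v = (\<chi> j k. u $ j * v $ k)"

end

theory Submission
  imports Defs
begin

lemma sq_facts:
  fixes \<mu> \<rho> si ci :: real
  assumes mu: "\<mu> > 0" and rho: "\<rho> > 0"
  defines "w \<equiv> si - \<rho> * ci"
  shows "sqrt (w^2 + 4*\<rho>*\<mu>) > \<bar>w\<bar>" "(sqrt (w^2 + 4*\<rho>*\<mu>))^2 = w^2 + 4*\<rho>*\<mu>"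
proof -
  have "w^2 < w^2 + 4*\<rho>*\<mu>" using mu rho by simp
  hence "sqrt (w^2) < sqrt (w^2 + 4*\<rho>*\<mu>)" by (rule real_sqrt_less_mono)
  thus "sqrt (w^2 + 4*\<rho>*\<mu>) > \<bar>w\<bar>" by simp
  show "(sqrt (w^2 + 4*\<rho>*\<mu>))^2 = w^2 + 4*\<rho>*\<mu>" using mu rho by (simp add: add_nonneg_pos)
qed

lemma zc_pos: assumes "\<mu> > 0" "\<rho> > 0" shows "zc \<mu> \<rho> si ci > 0"
  using sq_facts[OF assms, of si ci] assms unfolding zc_def by (simp add: abs_less_iff)
lemma yc_pos: assumes "\<mu> > 0" "\<rho> > 0" shows "yc \<mu> \<rho> si ci > 0"
  using sq_facts[OF assms, of si ci] assms unfolding yc_def by (simp add: abs_less_iff)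

lemma sqrt_deriv:
  fixes \<mu> \<rho> si ci :: real
  assumes mu: "\<mu> > 0" and rho: "\<rho> > 0"
  shows "((\<lambda>c. sqrt ((si - \<rho> * c)^2 + 4*\<rho>*\<mu>)) has_real_derivative
      (- \<rho> * (si - \<rho> * ci) / sqrt ((si - \<rho> * ci)^2 + 4*\<rho>*\<mu>))) (at ci)"
proof -
  have pos: "(si - \<rho> * ci)^2 + 4*\<rho>*\<mu> > 0" using mu rho by (simp add: add_nonneg_pos)
  have d: "((\<lambda>c. (si - \<rho> * c)^2 + 4*\<rho>*\<mu>) has_real_derivative (2*(si-\<rho>*ci)*(-\<rho>))) (at ci)"
    by (rule derivative_eq_intros refl | simp)+
  show ?thesis using DERIV_chain2[OF DERIV_real_sqrt[OF pos] d]
    by (rule DERIV_cong) (simp add: divide_simps)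
qed

lemma zy_facts:
  fixes \<mu> \<rho> si ci :: real
  assumes mu: "\<mu> > 0" and rho: "\<rho> > 0"
  shows "zc \<mu> \<rho> si ci * yc \<mu> \<rho> si ci = \<mu> / \<rho>"
    "zc \<mu> \<rho> si ci + yc \<mu> \<rho> si ci = sqrt ((si - \<rho> * ci)^2 + 4*\<rho>*\<mu>) / \<rho>"
proof -
  define w where "w = si - \<rho> * ci"
  define r where "r = sqrt ((si - \<rho> * ci)^2 + 4*\<rho>*\<mu>)"
  have r2: "r^2 = w^2 + 4*\<rho>*\<mu>" unfolding r_def w_def by (rule sq_facts(2)[OF mu rho])
  have "zc \<mu> \<rho> si ci * yc \<mu> \<rho> si ci = (r^2 - w^2) / (4*\<rho>^2)"
  proof -
    have "zc \<mu> \<rho> si ci = (r - w)/(2*\<rho>)" "yc \<mu> \<rho> si ci = (r + w)/(2*\<rho>)"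
      unfolding zc_def yc_def r_def w_def by simp_all
    hence "zc \<mu> \<rho> si ci * yc \<mu> \<rho> si ci = ((r - w)/(2*\<rho>)) * ((r + w)/(2*\<rho>))" by simp
    also have "\<dots> = (r^2 - w^2) / (4*\<rho>^2)" using rho by (simp add: field_simps power2_eq_square)
    finally show ?thesis .
  qed
  also have "\<dots> = \<mu> / \<rho>" unfolding r2 using rho by (simp add: field_simps power2_eq_square)
  finally show "zc \<mu> \<rho> si ci * yc \<mu> \<rho> si ci = \<mu> / \<rho>" .
  show "zc \<mu> \<rho> si ci + yc \<mu> \<rho> si ci = sqrt ((si - \<rho> * ci)^2 + 4*\<rho>*\<mu>) / \<rho>"
    unfolding zc_def yc_def using rho by (simp add: field_simps)
qed

lemma zc_deriv:
  fixes \<mu> \<rho> si ci :: real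
  assumes mu: "\<mu> > 0" and rho: "\<rho> > 0"
  shows "(zc \<mu> \<rho> si has_real_derivative (\<rho> * zc \<mu> \<rho> si ci / sqrt ((si - \<rho> * ci)^2 + 4*\<rho>*\<mu>))) (at ci)"
proof -
  have e: "zc \<mu> \<rho> si = (\<lambda>c. (sqrt ((si - \<rho> * c)^2 + 4*\<rho>*\<mu>) - (si - \<rho> * c)) / (2 * \<rho>))"
    by (rule ext) (simp add: zc_def)
  have rp: "sqrt ((si - \<rho> * ci)^2 + 4*\<rho>*\<mu>) > 0"
    using sq_facts(1)[OF mu rho, of si ci] by linarith
  have ld: "((\<lambda>c. si - \<rho>*c) has_real_derivative -\<rho>) (at ci)"
    by (rule derivative_eq_intros refl | simp)+
  show ?thesis unfolding e
    using DERIV_cdivide[OF DERIV_diff[OF sqrt_deriv[OF mu rho, where si=si and ci=ci] ld], where c="2*\<rho>"]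
    apply (rule DERIV_cong)
    using rp rho by (simp add: field_simps zc_def yc_def)
qed

lemma yc_deriv:
  fixes \<mu> \<rho> si ci :: real
  assumes mu: "\<mu> > 0" and rho: "\<rho> > 0"
  shows "(yc \<mu> \<rho> si has_real_derivative (- \<rho> * yc \<mu> \<rho> si ci / sqrt ((si - \<rho> * ci)^2 + 4*\<rho>*\<mu>))) (at ci)"
proof -
  have e: "yc \<mu> \<rho> si = (\<lambda>c. (sqrt ((si - \<rho> * c)^2 + 4*\<rho>*\<mu>) + (si - \<rho> * c)) / (2 * \<rho>))"
    by (rule ext) (simp add: yc_def)
  have rp: "sqrt ((si - \<rho> * ci)^2 + 4*\<rho>*\<mu>) > 0"
    using sq_facts(1)[OF mu rho, of si ci] by linarith
  have ld: "((\<lambda>c. si - \<rho>*c) has_real_derivative -\<rho>) (at ci)"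
    by (rule derivative_eq_intros refl | simp)+
  show ?thesis unfolding e
    using DERIV_cdivide[OF DERIV_add[OF sqrt_deriv[OF mu rho, where si=si and ci=ci] ld], where c="2*\<rho>"]
    apply (rule DERIV_cong)
    using rp rho by (simp add: field_simps zc_def yc_def)
qed

lemma yc_deriv2:
  fixes \<mu> \<rho> si ci :: real
  assumes mu: "\<mu> > 0" and rho: "\<rho> > 0"
  shows "(yc \<mu> \<rho> si has_real_derivative (- (yc \<mu> \<rho> si ci / (zc \<mu> \<rho> si ci + yc \<mu> \<rho> si ci)))) (at ci)"
proof -
  have rp: "sqrt ((si - \<rho> * ci)^2 + 4*\<rho>*\<mu>) > 0"
    using sq_facts(1)[OF mu rho, of si ci] by linarith
  show ?thesis using yc_deriv[OF mu rho, of si ci] apply (rule DERIV_cong)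
    unfolding zy_facts(2)[OF mu rho] using rho rp by (simp add: field_simps)
qed

lemma alg1: "(\<rho>::real) > 0 \<Longrightarrow> z > 0 \<Longrightarrow> y > 0 \<Longrightarrow> \<rho> * y =
        \<rho> * (\<rho> * (y * y)) / (\<rho> * y + \<rho> * z) +
        \<rho> * (\<rho> * (y * z)) / (\<rho> * y + \<rho> * z)"
proof -
  assume a: "\<rho> > 0" "z > 0" "y > 0"
  hence ne: "\<rho> * y + \<rho> * z \<noteq> 0" by (smt (verit) mult_pos_pos)
  have "\<rho> * (\<rho> * (y * y)) / (\<rho> * y + \<rho> * z) + \<rho> * (\<rho> * (y * z)) / (\<rho> * y + \<rho> * z)
     = (\<rho> * y) * (\<rho> * y + \<rho> * z) / (\<rho> * y + \<rho> * z)"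
    by (simp add: add_divide_distrib[symmetric] algebra_simps)
  also have "\<dots> = \<rho> * y" using ne by simp
  finally show ?thesis by simp
qed

lemma hc_deriv:
  fixes \<mu> \<rho> si ci :: real
  assumes mu: "\<mu> > 0" and rho: "\<rho> > 0"
  shows "(hc \<mu> \<rho> si has_real_derivative (- \<rho> * yc \<mu> \<rho> si ci)) (at ci)"
proof -
  have e: "hc \<mu> \<rho> si = (\<lambda>c. - \<mu> * ln (zc \<mu> \<rho> si c) + \<rho> / 2 * (yc \<mu> \<rho> si c)^2 - si^2 / (2 * \<rho>))"
    by (rule ext) (simp add: hc_def)
  define r where "r = sqrt ((si - \<rho> * ci)^2 + 4*\<rho>*\<mu>)"
  have rp: "r > 0"
    using sq_facts(1)[OF mu rho, of si ci] r_def by linarith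
  have zp: "zc \<mu> \<rho> si ci > 0" by (rule zc_pos[OF mu rho])
  have zy: "zc \<mu> \<rho> si ci * yc \<mu> \<rho> si ci = \<mu> / \<rho>" "zc \<mu> \<rho> si ci + yc \<mu> \<rho> si ci = r / \<rho>"
    using zy_facts[OF mu rho, of si ci] r_def by auto
  define z where "z = zc \<mu> \<rho> si ci"
  define y where "y = yc \<mu> \<rho> si ci"
  have mu_eq: "\<mu> = \<rho> * z * y" using zy(1) rho unfolding z_def y_def by (simp add: field_simps)
  have r_eq: "r = \<rho> * (z + y)" using zy(2) rho unfolding z_def y_def by (simp add: field_simps)
  show ?thesis unfolding e
    apply (rule DERIV_cong)
     apply (rule derivative_eq_intros zc_deriv[OF mu rho] yc_deriv[OF mu rho] refl zp)+
    unfolding r_def[symmetric] z_def[symmetric] y_def[symmetric]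
    apply (subst mu_eq, subst r_eq)
    using rp rho zp yc_pos[OF mu rho, of si ci] add_pos_pos[OF mult_pos_pos[OF rho yc_pos[OF mu rho, of si ci]] mult_pos_pos[OF rho zp]] unfolding z_def[symmetric] y_def[symmetric] r_eq
    apply (simp add: field_simps power2_eq_square add_pos_pos)
    using alg1 by blast
qed

lemma yc_antimono: assumes mu: "\<mu> > 0" and rho: "\<rho> > 0" and ab: "(a::real) \<le> b"
  shows "yc \<mu> \<rho> si b \<le> yc \<mu> \<rho> si a"
proof (rule DERIV_nonpos_imp_nonincreasing[OF ab])
  fix t
  have "yc \<mu> \<rho> si t / (zc \<mu> \<rho> si t + yc \<mu> \<rho> si t) \<ge> 0"
    using zc_pos[OF mu rho, of si t] yc_pos[OF mu rho, of si t] by simp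
  thus "\<exists>y. DERIV (yc \<mu> \<rho> si) t :> y \<and> y \<le> 0" using yc_deriv2[OF mu rho, of si t] by force
qed

lemma hc_antimono: assumes mu: "\<mu> > 0" and rho: "\<rho> > 0" and ab: "(a::real) \<le> b"
  shows "hc \<mu> \<rho> si b \<le> hc \<mu> \<rho> si a"
proof (rule DERIV_nonpos_imp_nonincreasing[OF ab])
  fix t
  have "- \<rho> * yc \<mu> \<rho> si t \<le> 0"
    using yc_pos[OF mu rho, of si t] rho by simp
  thus "\<exists>y. DERIV (hc \<mu> \<rho> si) t :> y \<and> y \<le> 0" using hc_deriv[OF mu rho, of si t] by force
qed

lemma hc_convex: assumes mu: "\<mu> > 0" and rho: "\<rho> > 0"
  shows "convex_on UNIV (hc \<mu> \<rho> si)"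
  by (rule convex_on_realI[where f'="\<lambda>t. - \<rho> * yc \<mu> \<rho> si t"])
    (use hc_deriv[OF mu rho] yc_antimono[OF mu rho] rho in auto)

lemma outer_mv: "outer u v *v h = (v \<bullet> h) *\<^sub>R u"
  by (simp add: vec_eq_iff outer_def matrix_vector_mult_def inner_vec_def sum_distrib_left mult_ac)

lemma sum_mv: "(\<Sum>i\<in>S. A i) *v (h::real^'n) = (\<Sum>i\<in>S. A i *v h)"
  by (induction S rule: infinite_finite_induct) (simp_all add: matrix_vector_mult_add_rdistrib)

theorem lemma2p4:
  fixes f :: "real^'n \<Rightarrow> real"
    and gf :: "real^'n \<Rightarrow> real^'n"
    and Hf :: "real^'n \<Rightarrow> real^'n^'n"
    and c :: "real^'n \<Rightarrow> real^'m"
    and gc :: "'m \<Rightarrow> real^'n \<Rightarrow> real^'n"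
    and Hc :: "'m \<Rightarrow> real^'n \<Rightarrow> real^'n^'n"
    and \<mu> \<rho> :: real and s :: "real^'m"
  assumes f1: "\<And>x. (f has_derivative (\<lambda>h. gf x \<bullet> h)) (at x)"
    and f2: "\<And>x. (gf has_derivative (\<lambda>h. Hf x *v h)) (at x)"
    and f3: "continuous_on UNIV Hf"
    and c1: "\<And>i x. ((\<lambda>x. c x $ i) has_derivative (\<lambda>h. gc i x \<bullet> h)) (at x)"
    and c2: "\<And>i x. (gc i has_derivative (\<lambda>h. Hc i x *v h)) (at x)"
    and c3: "\<And>i. continuous_on UNIV (Hc i)"
    and mu: "\<mu> > 0" and rho: "\<rho> > 0"
  shows "(\<forall>x.
            ((\<lambda>x. AugLag f c \<mu> \<rho> x s) has_derivative
               (\<lambda>h. (gf x - \<rho> *\<^sub>R (\<Sum>i\<in>UNIV. yv c \<mu> \<rho> x s i *\<^sub>R gc i x)) \<bullet> h)) (at x)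
          \<and> ((\<lambda>x. gf x - \<rho> *\<^sub>R (\<Sum>i\<in>UNIV. yv c \<mu> \<rho> x s i *\<^sub>R gc i x)) has_derivative
               (\<lambda>h. ((Hf x - \<rho> *\<^sub>R (\<Sum>i\<in>UNIV. yv c \<mu> \<rho> x s i *\<^sub>R Hc i x))
                     + \<rho> *\<^sub>R (\<Sum>i\<in>UNIV. (yv c \<mu> \<rho> x s i / (zv c \<mu> \<rho> x s i + yv c \<mu> \<rho> x s i))
                                         *\<^sub>R outer (gc i x) (gc i x))) *v h)) (at x))
       \<and> ((convex_on UNIV f \<and> (\<forall>i. convex_on UNIV (\<lambda>x. - (c x $ i))))
            \<longrightarrow> convex_on UNIV (\<lambda>x. AugLag f c \<mu> \<rho> x s))"
proof (intro conjI allI impI)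
  fix x
  have hd: "((\<lambda>x. hc \<mu> \<rho> (s$i) (c x $ i)) has_derivative
     (\<lambda>h. (- \<rho> * yv c \<mu> \<rho> x s i) * (gc i x \<bullet> h))) (at x)" for i
    using has_derivative_compose[OF c1 has_field_derivative_imp_has_derivative[OF hc_deriv[OF mu rho]]]
    by (simp add: yv_def)
  have "((\<lambda>x. AugLag f c \<mu> \<rho> x s) has_derivative
     (\<lambda>h. gf x \<bullet> h + (\<Sum>i\<in>UNIV. (- \<rho> * yv c \<mu> \<rho> x s i) * (gc i x \<bullet> h)))) (at x)"
    unfolding AugLag_def by (intro has_derivative_add f1 has_derivative_sum hd)
  then show "((\<lambda>x. AugLag f c \<mu> \<rho> x s) has_derivative
               (\<lambda>h. (gf x - \<rho> *\<^sub>R (\<Sum>i\<in>UNIV. yv c \<mu> \<rho> x s i *\<^sub>R gc i x)) \<bullet> h)) (at x)"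
    apply (rule has_derivative_eq_rhs)
    by (auto simp: fun_eq_iff inner_diff_left inner_sum_left sum_distrib_left sum_negf algebra_simps)
next
  fix x
  have yd: "((\<lambda>x. yv c \<mu> \<rho> x s i) has_derivative
     (\<lambda>h. (- (yv c \<mu> \<rho> x s i / (zv c \<mu> \<rho> x s i + yv c \<mu> \<rho> x s i))) * (gc i x \<bullet> h))) (at x)" for i
    using has_derivative_compose[OF c1 has_field_derivative_imp_has_derivative[OF yc_deriv2[OF mu rho]]]
    by (simp add: yv_def zv_def)
  have "((\<lambda>x. gf x - \<rho> *\<^sub>R (\<Sum>i\<in>UNIV. yv c \<mu> \<rho> x s i *\<^sub>R gc i x)) has_derivative
     (\<lambda>h. Hf x *v h - \<rho> *\<^sub>R (\<Sum>i\<in>UNIV. yv c \<mu> \<rho> x s i *\<^sub>R (Hc i x *v h) +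
        ((- (yv c \<mu> \<rho> x s i / (zv c \<mu> \<rho> x s i + yv c \<mu> \<rho> x s i))) * (gc i x \<bullet> h)) *\<^sub>R gc i x))) (at x)"
    by (intro has_derivative_diff f2 has_derivative_scaleR_right has_derivative_sum has_derivative_scaleR yd c2)
  then show "((\<lambda>x. gf x - \<rho> *\<^sub>R (\<Sum>i\<in>UNIV. yv c \<mu> \<rho> x s i *\<^sub>R gc i x)) has_derivative
               (\<lambda>h. ((Hf x - \<rho> *\<^sub>R (\<Sum>i\<in>UNIV. yv c \<mu> \<rho> x s i *\<^sub>R Hc i x))
                     + \<rho> *\<^sub>R (\<Sum>i\<in>UNIV. (yv c \<mu> \<rho> x s i / (zv c \<mu> \<rho> x s i + yv c \<mu> \<rho> x s i))
                                         *\<^sub>R outer (gc i x) (gc i x))) *v h)) (at x)"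
    apply (rule has_derivative_eq_rhs)
    apply (rule ext)
    apply (simp add: matrix_vector_mult_add_rdistrib matrix_vector_mult_diff_rdistrib
        scaleR_matrix_vector_assoc[symmetric] sum_mv outer_mv sum.distrib scaleR_sum_right algebra_simps)
    apply (simp add: sum_subtractf)
    done
next
  assume cv: "convex_on UNIV f \<and> (\<forall>i. convex_on UNIV (\<lambda>x. - (c x $ i)))"
  show "convex_on UNIV (\<lambda>x. AugLag f c \<mu> \<rho> x s)"
  proof (rule convex_onI)
    fix t :: real and x y :: "real^'n"
    assume t: "t > 0" "t < 1"
    let ?p = "(1 - t) *\<^sub>R x + t *\<^sub>R y"
    have fi: "f ?p \<le> (1 - t) * f x + t * f y"
      using convex_onD[OF conjunct1[OF cv], of t x y] t by simp
    have hi: "hc \<mu> \<rho> (s$i) (c ?p $ i) \<le> (1 - t) * hc \<mu> \<rho> (s$i) (c x $ i) + t * hc \<mu> \<rho> (s$i) (c y $ i)" for i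
    proof -
      have "- c ?p $ i \<le> (1 - t) * (- c x $ i) + t * (- c y $ i)"
        using convex_onD[OF spec[OF conjunct2[OF cv], of i], of t x y] t by simp
      hence "(1 - t) * c x $ i + t * c y $ i \<le> c ?p $ i" by (simp add: algebra_simps)
      hence "hc \<mu> \<rho> (s$i) (c ?p $ i) \<le> hc \<mu> \<rho> (s$i) ((1 - t) * c x $ i + t * c y $ i)"
        by (rule hc_antimono[OF mu rho])
      also have "\<dots> \<le> (1 - t) * hc \<mu> \<rho> (s$i) (c x $ i) + t * hc \<mu> \<rho> (s$i) (c y $ i)"
        using convex_onD[OF hc_convex[OF mu rho], of t "c x $ i" "c y $ i"] t by simp
      finally show ?thesis .
    qed
    have "(\<Sum>i\<in>UNIV. hc \<mu> \<rho> (s$i) (c ?p $ i)) \<le> (\<Sum>i\<in>UNIV. (1 - t) * hc \<mu> \<rho> (s$i) (c x $ i) + t * hc \<mu> \<rho> (s$i) (c y $ i))"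
      by (rule sum_mono) (rule hi)
    also have "\<dots> = (1 - t) * (\<Sum>i\<in>UNIV. hc \<mu> \<rho> (s$i) (c x $ i)) + t * (\<Sum>i\<in>UNIV. hc \<mu> \<rho> (s$i) (c y $ i))"
      by (simp add: sum.distrib sum_distrib_left)
    finally show "AugLag f c \<mu> \<rho> ?p s \<le> (1 - t) * AugLag f c \<mu> \<rho> x s + t * AugLag f c \<mu> \<rho> y s"
      using fi unfolding AugLag_def by (simp add: algebra_simps)
  qed simp
qed

end
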